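(* Let $\mathcal P$ be a Datalog program with negation, viewed as a program over Belnap's bilattice $\mathcal{FOUR}$ whose rules have the form $A\leftarrow (L_{1,1}\wedge\dots\wedge L_{1,n_1})\vee\dots\vee(L_{k,1}\wedge\dots\wedge L_{k,n_k})$ with the $L_{p,q}$ ground literals. (1) If $H_{\mathcal F}$ is the everywhere false hypothesis ($H_{\mathcal F}(A)=\mathcal F$ for all $A$), then $sem^{H_{\mathcal F}}_{\mathcal P}$ coincides with the well-founded semantics of $\mathcal P$. (2) If $H_{\mathcal U}$ is the everywhere underdefined hypothesis ($H_{\mathcal U}(A)=\mathcal U$ for all $A$), then $sem^{H_{\mathcal U}}_{\mathcal P}$ coincides with the Kripke–Kleene semantics of $\mathcal P$.
   Context: $\mathcal{FOUR}=\{\mathcal F,\mathcal T,\mathcal U,\mathcal O\}$ with knowledge order $\mathcal U\le_k\mathcal F,\mathcal T\le_k\mathcal O$ and truth order $\mathcal F\le_t\mathcal U,\mathcal O\le_t\mathcal T$; $\wedge,\vee$ are meet/join for $\le_t$, $\otimes,\oplus$ meet/join for $\le_k$; $\neg\mathcal T=\mathcal F$, $\neg\mathcal F=\mathcal T$, $\neg\mathcal U=\mathcal U$, $\neg\mathcal O=\mathcal O$. A program $\mathcal P=\langle F,R\rangle$ consists of a function $F:\mathcal{HB}_{\mathcal P}\to\mathcal{FOUR}$ (the facts) and a finite set $R$ of ground clauses $A\leftarrow B$, each ground atom the head of at most one clause; $Head$ is the set of heads. An interpretation is a function $\mathcal{HB}_{\mathcal P}\to\mathcal{FOUR}$, extended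 to formulas by $I(\neg A)=\neg I(A)$, $I(X\wedge Y)=I(X)\wedge I(Y)$, $I(X\vee Y)=I(X)\vee I(Y)$. Operations on interpretations are pointwise. $I,J$ are compatible if $I(A)\neq\mathcal U\neq J(A)$ implies $I(A)=J(A)$; $I\le J$ means $I(A)\neq\mathcal U\Rightarrow I(A)=J(A)$ for all $A$. $B\equiv_I\alpha$ means $J(B)=\alpha$ for all $J$ with $I\le J$. $T_R(I)(A)=\alpha$ if there is a clause $A\leftarrow B$ in $R$ with $B\equiv_I\alpha$, and $\mathcal U$ otherwise. For a program $\mathcal Q=\langle G,R\rangle$ and hypothesis $H$, $H'$ is sound w.r.t. $\mathcal Q$ if $G,H'$ are compatible and $H'_{/Head}\le T_R(G\oplus H')$ (where $I_{/S}$ is $I$ on $S$ and $\mathcal U$ elsewhere); the support $s^H_{\mathcal Q}$ is the maximal (w.r.t. $\le$) sound $H'\le H$. The $H$-founded semantics $sem^H_{\mathcal P}$ is the limit of the $\le$-increasing sequence $F_0=F$, $F_{n+1}=T_R(F_n)\oplus s^H_{\langle F_n,R\rangle}$. Interpretations with values in $\{\mathcal F,\mathcal T,\mathcal U\}$ are identified with partial interpretations (consistent sets of ground literals) via $I\mapsto\{A\mid I(A)=\mathcal T\}\cup\{\neg A\mid I(A)=\mathcal F\}$. Well-founded semantics (Van Gelder–Ross–Schlipf): for a partial interpretation $I$, $T_P(I)$ is the set of heads of rules all of whose body literals are in $I$; a set $U$ of ground atoms is unfounded w.r.t. $I$ if for every $A\in U$ and every rule with head $A$, some body literal $B$ has $\neg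 B\in I$ or $B\in U$; $U_P(I)$ is the greatest unfounded set; the well-founded semantics is the least fixpoint of $W_P(I)=T_P(I)\cup\neg U_P(I)$. Kripke–Kleene semantics (Fitting): $\Phi_{\mathcal P}(v)(A)=\mathcal T$ if there is a rule with head $A$ whose body is true under $v$; $=\mathcal F$ if there is a rule with head $A$ and all rules with head $A$ have body false under $v$; $=\mathcal U$ otherwise (three-valued Kleene evaluation); the Kripke–Kleene semantics is the fixpoint of $\Phi_{\mathcal P}$ obtained by iterating from the everywhere-$\mathcal U$ valuation (its $\le_k$-least fixpoint). *)

theory Defs
  imports Main
begin

datatype four = Fv | Tv | Uv | Ov

definition le_k :: "four \<Rightarrow> four \<Rightarrow> bool" where
  "le_k x y \<longleftrightarrow> x = y \<or> x = Uv \<or> y = Ov"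

definition le_t :: "four \<Rightarrow> four \<Rightarrow> bool" where
  "le_t x y \<longleftrightarrow> x = y \<or> x = Fv \<or> y = Tv"

fun meet_t :: "four \<Rightarrow> four \<Rightarrow> four" where
  "meet_t Fv _ = Fv" | "meet_t _ Fv = Fv"
| "meet_t Tv y = y" | "meet_t x Tv = x"
| "meet_t Uv Uv = Uv" | "meet_t Ov Ov = Ov"
| "meet_t Uv Ov = Fv" | "meet_t Ov Uv = Fv"

fun join_t :: "four \<Rightarrow> four \<Rightarrow> four" where
  "join_t Tv _ = Tv" | "join_t _ Tv = Tv"
| "join_t Fv y = y" | "join_t x Fv = x"
| "join_t Uv Uv = Uv" | "join_t Ov Ov = Ov"
| "join_t Uv Ov = Tv" | "join_t Ov Uv = Tv"

fun join_k :: "four \<Rightarrow> four \<Rightarrow> four" where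
  "join_k Ov _ = Ov" | "join_k _ Ov = Ov"
| "join_k Uv y = y" | "join_k x Uv = x"
| "join_k Tv Tv = Tv" | "join_k Fv Fv = Fv"
| "join_k Tv Fv = Ov" | "join_k Fv Tv = Ov"

fun neg4 :: "four \<Rightarrow> four" where
  "neg4 Tv = Fv" | "neg4 Fv = Tv" | "neg4 Uv = Uv" | "neg4 Ov = Ov"

datatype 'a fml = Atom 'a | Const four | Neg "'a fml" | And "'a fml" "'a fml" | Or "'a fml" "'a fml"

type_synonym 'a interp = "'a \<Rightarrow> four"

fun eval :: "'a interp \<Rightarrow> 'a fml \<Rightarrow> four" where
  "eval I (Atom A) = I A"
| "eval I (Const c) = c"
| "eval I (Neg X) = neg4 (eval I X)"
| "eval I (And X Y) = meet_t (eval I X) (eval I Y)"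
| "eval I (Or X Y) = join_t (eval I X) (eval I Y)"

definition joink_i :: "'a interp \<Rightarrow> 'a interp \<Rightarrow> 'a interp" where
  "joink_i I J = (\<lambda>A. join_k (I A) (J A))"

definition compatible :: "'a interp \<Rightarrow> 'a interp \<Rightarrow> bool" where
  "compatible I J \<longleftrightarrow> (\<forall>A. I A \<noteq> Uv \<and> J A \<noteq> Uv \<longrightarrow> I A = J A)"

definition le_i :: "'a interp \<Rightarrow> 'a interp \<Rightarrow> bool" where
  "le_i I J \<longleftrightarrow> (\<forall>A. I A \<noteq> Uv \<longrightarrow> I A = J A)"

definition fequiv :: "'a interp \<Rightarrow> 'a fml \<Rightarrow> four \<Rightarrow> bool" where
  "fequiv I B \<alpha> \<longleftrightarrow> (\<forall>J. le_i I J \<longrightarrow> eval J B = \<alpha>)"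

text \<open>Clauses: pairs (head, body). A program is \<open>\<langle>F,R\<rangle>\<close>.\<close>
type_synonym 'a clauses = "('a \<times> 'a fml) set"

definition heads :: "'a clauses \<Rightarrow> 'a set" where
  "heads R = fst ` R"

definition T_R :: "'a clauses \<Rightarrow> 'a interp \<Rightarrow> 'a interp" where
  "T_R R I A = (if \<exists>B \<alpha>. (A, B) \<in> R \<and> fequiv I B \<alpha>
                then (THE \<alpha>. \<exists>B. (A, B) \<in> R \<and> fequiv I B \<alpha>) else Uv)"

definition restrict_i :: "'a interp \<Rightarrow> 'a set \<Rightarrow> 'a interp" where
  "restrict_i I S = (\<lambda>A. if A \<in> S then I A else Uv)"

definition sound :: "'a interp \<Rightarrow> 'a clauses \<Rightarrow> 'a interp \<Rightarrow> bool" where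
  "sound G R H' \<longleftrightarrow> compatible G H' \<and> le_i (restrict_i H' (heads R)) (T_R R (joink_i G H'))"

definition support :: "'a interp \<Rightarrow> 'a clauses \<Rightarrow> 'a interp \<Rightarrow> 'a interp" where
  "support G R H = (THE H'. sound G R H' \<and> le_i H' H \<and>
                      (\<forall>H''. sound G R H'' \<and> le_i H'' H \<longrightarrow> le_i H'' H'))"

primrec hseq :: "'a interp \<Rightarrow> 'a clauses \<Rightarrow> 'a interp \<Rightarrow> nat \<Rightarrow> 'a interp" where
  "hseq F R H 0 = F"
| "hseq F R H (Suc n) = joink_i (T_R R (hseq F R H n)) (support (hseq F R H n) R H)"

text \<open>Limit of the (\<open>\<le>\<close>-increasing) sequence: pointwise, the value of an atom
  at the first stage where it becomes defined.\<close>
definition hsem :: "'a interp \<Rightarrow> 'a clauses \<Rightarrow> 'a interp \<Rightarrow> 'a interp" where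
  "hsem F R H = (\<lambda>A. if \<exists>n. hseq F R H n A \<noteq> Uv
                      then hseq F R H (LEAST n. hseq F R H n A \<noteq> Uv) A else Uv)"

datatype 'a lit = Pos 'a | NegL 'a

fun neg_lit :: "'a lit \<Rightarrow> 'a lit" where
  "neg_lit (Pos A) = NegL A" | "neg_lit (NegL A) = Pos A"

type_synonym 'a nprog = "('a \<times> 'a lit list) set"

fun lit_fml :: "'a lit \<Rightarrow> 'a fml" where
  "lit_fml (Pos A) = Atom A" | "lit_fml (NegL A) = Neg (Atom A)"

fun conj_fml :: "'a fml list \<Rightarrow> 'a fml" where
  "conj_fml [] = Const Tv" | "conj_fml (X # Xs) = And X (conj_fml Xs)"

fun disj_fml :: "'a fml list \<Rightarrow> 'a fml" where
  "disj_fml [] = Const Fv" | "disj_fml (X # Xs) = Or X (disj_fml Xs)"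

text \<open>The FOUR-program associated with a normal program: all rules with head A are
  merged into the single clause A <- (L11 and ... ) or ... or (Lk1 and ...);
  facts (empty bodies) become the empty conjunction (true).\<close>
definition bodies_list :: "'a nprog \<Rightarrow> 'a \<Rightarrow> 'a lit list list" where
  "bodies_list P A = (SOME bs. set bs = {b. (A, b) \<in> P})"

definition four_rules :: "'a nprog \<Rightarrow> 'a clauses" where
  "four_rules P = {(A, disj_fml (map (\<lambda>b. conj_fml (map lit_fml b)) (bodies_list P A))) | A. A \<in> fst ` P}"

definition four_facts :: "'a interp" where
  "four_facts = (\<lambda>_. Uv)"

definition TP :: "'a nprog \<Rightarrow> 'a lit set \<Rightarrow> 'a set" where
  "TP P I = {A. \<exists>body. (A, body) \<in> P \<and> (\<forall>L \<in> set body. L \<in> I)}"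

definition unfounded :: "'a nprog \<Rightarrow> 'a lit set \<Rightarrow> 'a set \<Rightarrow> bool" where
  "unfounded P I U \<longleftrightarrow> (\<forall>A \<in> U. \<forall>body. (A, body) \<in> P \<longrightarrow>
      (\<exists>L \<in> set body. neg_lit L \<in> I \<or> (\<exists>B. L = Pos B \<and> B \<in> U)))"

definition UP :: "'a nprog \<Rightarrow> 'a lit set \<Rightarrow> 'a set" where
  "UP P I = \<Union> {U. unfounded P I U}"

definition WP :: "'a nprog \<Rightarrow> 'a lit set \<Rightarrow> 'a lit set" where
  "WP P I = Pos ` TP P I \<union> NegL ` UP P I"

definition wfs :: "'a nprog \<Rightarrow> 'a lit set" where
  "wfs P = lfp (WP P)"

definition to_partial :: "'a interp \<Rightarrow> 'a lit set" where
  "to_partial I = {Pos A | A. I A = Tv} \<union> {NegL A | A. I A = Fv}"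

definition lit_val :: "'a interp \<Rightarrow> 'a lit \<Rightarrow> four" where
  "lit_val v L = (case L of Pos A \<Rightarrow> v A | NegL A \<Rightarrow> neg4 (v A))"

definition body_true :: "'a interp \<Rightarrow> 'a lit list \<Rightarrow> bool" where
  "body_true v body \<longleftrightarrow> (\<forall>L \<in> set body. lit_val v L = Tv)"

definition body_false :: "'a interp \<Rightarrow> 'a lit list \<Rightarrow> bool" where
  "body_false v body \<longleftrightarrow> (\<exists>L \<in> set body. lit_val v L = Fv)"

definition Phi :: "'a nprog \<Rightarrow> 'a interp \<Rightarrow> 'a interp" where
  "Phi P v A = (if \<exists>body. (A, body) \<in> P \<and> body_true v body then Tv
               else if (\<exists>body. (A, body) \<in> P) \<and> (\<forall>body. (A, body) \<in> P \<longrightarrow> body_false v body) then Fv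
               else Uv)"

definition kk :: "'a nprog \<Rightarrow> 'a interp" where
  "kk P = (THE v. Phi P v = v \<and> (\<forall>w. Phi P w = w \<longrightarrow> le_i v w))"

end

theory Submission imports Defs begin

lemma le_i_refl: "le_i I I" by (simp add: le_i_def)
lemma le_i_trans: "le_i I J \<Longrightarrow> le_i J K \<Longrightarrow> le_i I K" by (simp add: le_i_def)
lemma le_i_antisym: "le_i I J \<Longrightarrow> le_i J I \<Longrightarrow> I = J"
  unfolding le_i_def by (rule ext) metis

lemma eval_lit: "eval J (lit_fml L) = lit_val J L"
  by (cases L) (auto simp: lit_val_def)

lemma bt_not_bf: "body_true J b \<Longrightarrow> \<not> body_false J b"
  by (auto simp: body_true_def body_false_def)

lemma conj_T: "body_true J b \<Longrightarrow> eval J (conj_fml (map lit_fml b)) = Tv"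
  by (induction b) (auto simp: body_true_def eval_lit)

lemma meet_F2: "meet_t x Fv = Fv" by (cases x) auto

lemma conj_F: "body_false J b \<Longrightarrow> eval J (conj_fml (map lit_fml b)) = Fv"
proof (induction b)
  case (Cons a b)
  show ?case
  proof (cases "lit_val J a = Fv")
    case True then show ?thesis by (simp add: eval_lit)
  next
    case False
    then have "body_false J b" using Cons.prems by (auto simp: body_false_def)
    then show ?thesis using Cons.IH by (simp add: meet_F2)
  qed
qed (simp add: body_false_def)

lemma conj_noO: "\<forall>A. J A \<noteq> Ov \<Longrightarrow> eval J (conj_fml (map lit_fml b)) =
   (if body_true J b then Tv else if body_false J b then Fv else Uv)"
proof (induction b)
  case Nil then show ?case by (simp add: body_true_def body_false_def)
next
  case (Cons a b)
  have "lit_val J a \<noteq> Ov" using Cons.prems by (cases a) (auto simp: lit_val_def, metis neg4.elims four.distinct)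
  then show ?case using Cons
    apply (cases "lit_val J a")
    apply (auto simp: body_true_def body_false_def eval_lit)
    done
qed

lemma conj_noU: "\<forall>A. J A \<noteq> Uv \<Longrightarrow> eval J (conj_fml (map lit_fml b)) =
   (if body_true J b then Tv else if body_false J b then Fv else Ov)"
proof (induction b)
  case Nil then show ?case by (simp add: body_true_def body_false_def)
next
  case (Cons a b)
  have "lit_val J a \<noteq> Uv" using Cons.prems by (cases a) (auto simp: lit_val_def, metis neg4.elims four.distinct)
  then show ?case using Cons
    apply (cases "lit_val J a")
    apply (auto simp: body_true_def body_false_def eval_lit)
    done
qed

abbreviation D :: "'a lit list list \<Rightarrow> 'a fml" where
  "D bs \<equiv> disj_fml (map (\<lambda>b. conj_fml (map lit_fml b)) bs)"

lemma join_T2: "join_t x Tv = Tv" by (cases x) auto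

lemma disj_T: "\<exists>b\<in>set bs. body_true J b \<Longrightarrow> eval J (D bs) = Tv"
proof (induction bs)
  case (Cons a bs)
  show ?case
  proof (cases "body_true J a")
    case True then show ?thesis by (simp add: conj_T)
  next
    case False
    then have "\<exists>b\<in>set bs. body_true J b" using Cons.prems by auto
    then show ?thesis using Cons.IH by (simp add: join_T2)
  qed
qed simp

lemma disj_F: "\<forall>b\<in>set bs. body_false J b \<Longrightarrow> eval J (D bs) = Fv"
  by (induction bs) (auto simp: conj_F)

lemma disj_noO: "\<forall>A. J A \<noteq> Ov \<Longrightarrow> eval J (D bs) =
   (if \<exists>b\<in>set bs. body_true J b then Tv else if \<forall>b\<in>set bs. body_false J b then Fv else Uv)"
proof (induction bs)
  case Nil then show ?case by simp
next
  case (Cons a bs)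
  then show ?case
    by (auto simp: conj_noO[OF Cons.prems] join_T2 dest: bt_not_bf)
qed

lemma disj_noU: "\<forall>A. J A \<noteq> Uv \<Longrightarrow> eval J (D bs) =
   (if \<exists>b\<in>set bs. body_true J b then Tv else if \<forall>b\<in>set bs. body_false J b then Fv else Ov)"
proof (induction bs)
  case Nil then show ?case by simp
next
  case (Cons a bs)
  then show ?case
    by (auto simp: conj_noU[OF Cons.prems] join_T2 dest: bt_not_bf)
qed


lemma lit_val_mono: "le_i I J \<Longrightarrow> lit_val I L \<noteq> Uv \<Longrightarrow> lit_val J L = lit_val I L"
  by (cases L) (auto simp: lit_val_def le_i_def, metis neg4.simps(3))

lemma bt_mono: "le_i I J \<Longrightarrow> body_true I b \<Longrightarrow> body_true J b"
  by (auto simp: body_true_def lit_val_mono)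

lemma bf_mono: "le_i I J \<Longrightarrow> body_false I b \<Longrightarrow> body_false J b"
proof -
  assume le: "le_i I J" and "body_false I b"
  then obtain L where "L \<in> set b" "lit_val I L = Fv" by (auto simp: body_false_def)
  moreover have "lit_val J L = lit_val I L" using le \<open>lit_val I L = Fv\<close> lit_val_mono by fastforce
  ultimately show ?thesis by (auto simp: body_false_def)
qed

definition toO :: "'a interp \<Rightarrow> 'a interp" where
  "toO I = (\<lambda>A. if I A = Uv then Ov else I A)"

lemma toO_le: "le_i I (toO I)" by (simp add: le_i_def toO_def)
lemma toO_noU: "\<forall>A. toO I A \<noteq> Uv" by (simp add: toO_def)

lemma lit_val_toO: "\<forall>A. I A \<noteq> Ov \<Longrightarrow> (lit_val (toO I) L = Tv \<longleftrightarrow> lit_val I L = Tv) \<and> (lit_val (toO I) L = Fv \<longleftrightarrow> lit_val I L = Fv)"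
  by (cases L; auto simp: lit_val_def toO_def; metis neg4.simps four.exhaust)

lemma bt_toO: "\<forall>A. I A \<noteq> Ov \<Longrightarrow> body_true (toO I) b = body_true I b"
  by (simp add: body_true_def lit_val_toO)
lemma bf_toO: "\<forall>A. I A \<noteq> Ov \<Longrightarrow> body_false (toO I) b = body_false I b"
  by (simp add: body_false_def lit_val_toO)

lemma fequiv_D: assumes "\<forall>A. I A \<noteq> Ov"
  shows "fequiv I (D bs) \<alpha> \<longleftrightarrow> ((\<exists>b\<in>set bs. body_true I b) \<and> \<alpha> = Tv) \<or>
     (\<not>(\<exists>b\<in>set bs. body_true I b) \<and> (\<forall>b\<in>set bs. body_false I b) \<and> \<alpha> = Fv)"
proof
  assume f: "fequiv I (D bs) \<alpha>"
  have 1: "eval I (D bs) = \<alpha>" using f le_i_refl unfolding fequiv_def by blast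
  have 2: "eval (toO I) (D bs) = \<alpha>" using f toO_le unfolding fequiv_def by blast
  show "((\<exists>b\<in>set bs. body_true I b) \<and> \<alpha> = Tv) \<or>
     (\<not>(\<exists>b\<in>set bs. body_true I b) \<and> (\<forall>b\<in>set bs. body_false I b) \<and> \<alpha> = Fv)"
    using 1 2 disj_noO[OF assms, of bs] disj_noU[OF toO_noU, of I bs] bt_toO[OF assms] bf_toO[OF assms]
    by (auto split: if_splits)
next
  assume "((\<exists>b\<in>set bs. body_true I b) \<and> \<alpha> = Tv) \<or>
     (\<not>(\<exists>b\<in>set bs. body_true I b) \<and> (\<forall>b\<in>set bs. body_false I b) \<and> \<alpha> = Fv)"
  then show "fequiv I (D bs) \<alpha>"
    unfolding fequiv_def
  proof (elim disjE conjE; intro allI impI)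
    fix J assume "le_i I J" "\<exists>b\<in>set bs. body_true I b" "\<alpha> = Tv"
    then show "eval J (D bs) = \<alpha>" using bt_mono disj_T by metis
  next
    fix J assume "le_i I J" "\<forall>b\<in>set bs. body_false I b" "\<alpha> = Fv"
    then show "eval J (D bs) = \<alpha>" using bf_mono disj_F by metis
  qed
qed

lemma bodies_list: assumes "finite P" shows "set (bodies_list P A) = {b. (A, b) \<in> P}"
proof -
  have "{b. (A, b) \<in> P} = snd ` (P \<inter> {p. fst p = A})" by force
  then have "finite {b. (A, b) \<in> P}" using assms by simp
  then have "\<exists>bs. set bs = {b. (A, b) \<in> P}" using finite_list by blast
  then show ?thesis unfolding bodies_list_def by (rule someI_ex)
qed

lemma heads_four: "heads (four_rules P) = fst ` P"
  unfolding heads_def four_rules_def by force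

lemma TR_Phi: assumes "finite P" "\<forall>A. I A \<noteq> Ov"
  shows "T_R (four_rules P) I = Phi P I"
proof (rule ext)
  fix A
  show "T_R (four_rules P) I A = Phi P I A"
  proof (cases "A \<in> fst ` P")
    case False
    then have "\<not>(\<exists>B. (A, B) \<in> four_rules P)" unfolding four_rules_def by auto
    moreover have "\<not>(\<exists>body. (A, body) \<in> P)" using False by force
    ultimately show ?thesis unfolding T_R_def Phi_def by auto
  next
    case True
    let ?bs = "bodies_list P A"
    have R: "(A, B) \<in> four_rules P \<longleftrightarrow> B = D ?bs" for B
      using True unfolding four_rules_def by auto
    have S: "set ?bs = {b. (A, b) \<in> P}" by (rule bodies_list[OF assms(1)])
    have ex: "\<exists>body. (A, body) \<in> P" using True by force
    show ?thesis
    proof (cases "\<exists>body. (A, body) \<in> P \<and> body_true I body")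
      case T: True
      then have "fequiv I (D ?bs) Tv" using fequiv_D[OF assms(2)] S by auto
      moreover have "fequiv I (D ?bs) \<alpha> \<Longrightarrow> \<alpha> = Tv" for \<alpha>
        using fequiv_D[OF assms(2)] S T by auto
      ultimately have "(THE \<alpha>. \<exists>B. (A, B) \<in> four_rules P \<and> fequiv I B \<alpha>) = Tv"
        unfolding R by auto
      then show ?thesis using T \<open>fequiv I (D ?bs) Tv\<close> unfolding T_R_def Phi_def R by auto
    next
      case NT: False
      show ?thesis
      proof (cases "\<forall>body. (A, body) \<in> P \<longrightarrow> body_false I body")
        case F: True
        then have "fequiv I (D ?bs) Fv" using fequiv_D[OF assms(2)] S NT by auto
        moreover have "fequiv I (D ?bs) \<alpha> \<Longrightarrow> \<alpha> = Fv" for \<alpha>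
          using fequiv_D[OF assms(2)] S NT by auto
        ultimately have "(THE \<alpha>. \<exists>B. (A, B) \<in> four_rules P \<and> fequiv I B \<alpha>) = Fv"
          unfolding R by auto
        then show ?thesis using NT F ex \<open>fequiv I (D ?bs) Fv\<close> unfolding T_R_def Phi_def R by auto
      next
        case NF: False
        have "\<not> fequiv I (D ?bs) \<alpha>" for \<alpha>
          using fequiv_D[OF assms(2)] S NT NF by auto
        then show ?thesis using NT NF unfolding T_R_def Phi_def R by auto
      qed
    qed
  qed
qed

lemma Phi_noO: "Phi P I A \<noteq> Ov" by (simp add: Phi_def)

lemma Phi_mono: "le_i I J \<Longrightarrow> le_i (Phi P I) (Phi P J)"
proof -
  assume le: "le_i I J"
  show ?thesis unfolding le_i_def
  proof (intro allI impI)
    fix A assume ne: "Phi P I A \<noteq> Uv"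
    show "Phi P I A = Phi P J A"
    proof (cases "\<exists>body. (A, body) \<in> P \<and> body_true I body")
      case True
      then have "\<exists>body. (A, body) \<in> P \<and> body_true J body" using bt_mono[OF le] by blast
      then show ?thesis using True by (simp add: Phi_def)
    next
      case False
      then have F: "(\<exists>body. (A, body) \<in> P) \<and> (\<forall>body. (A, body) \<in> P \<longrightarrow> body_false I body)"
        using ne by (auto simp: Phi_def split: if_splits)
      then have "(\<forall>body. (A, body) \<in> P \<longrightarrow> body_false J body)" using bf_mono[OF le] by blast
      then have "\<not>(\<exists>body. (A, body) \<in> P \<and> body_true J body)" using bt_not_bf by blast
      then show ?thesis using F False \<open>\<forall>body. (A, body) \<in> P \<longrightarrow> body_false J body\<close> by (simp add: Phi_def)
    qed
  qed
qed


lemma support_eq: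
  assumes "sound G R M" "le_i M H" "\<forall>H''. sound G R H'' \<and> le_i H'' H \<longrightarrow> le_i H'' M"
  shows "support G R H = M"
  unfolding support_def
proof (rule the_equality)
  show "sound G R M \<and> le_i M H \<and> (\<forall>H''. sound G R H'' \<and> le_i H'' H \<longrightarrow> le_i H'' M)"
    using assms by blast
next
  fix H' assume "sound G R H' \<and> le_i H' H \<and> (\<forall>H''. sound G R H'' \<and> le_i H'' H \<longrightarrow> le_i H'' H')"
  then show "H' = M" using assms le_i_antisym by blast
qed

lemma support_U: "support G R (\<lambda>_. Uv) = (\<lambda>_. Uv)"
proof (rule support_eq)
  show "sound G R (\<lambda>_. Uv)"
    by (simp add: sound_def compatible_def le_i_def restrict_i_def)
  show "le_i (\<lambda>_. Uv) (\<lambda>_. Uv)" by (rule le_i_refl)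
  show "\<forall>H''. sound G R H'' \<and> le_i H'' (\<lambda>_. Uv) \<longrightarrow> le_i H'' (\<lambda>_. Uv)" by blast
qed

lemma jk_U2[simp]: "join_k x Uv = x" by (cases x) auto
lemma jk_same[simp]: "join_k x x = x" by (cases x) auto

lemma compat_le1: "compatible G H \<Longrightarrow> le_i G (joink_i G H)"
  by (auto simp: compatible_def le_i_def joink_i_def)

lemma compat_mono2: "compatible G H1 \<Longrightarrow> compatible G H2 \<Longrightarrow> le_i H1 H2 \<Longrightarrow> le_i (joink_i G H1) (joink_i G H2)"
proof -
  have k: "\<And>x y1 y2. (x\<noteq>Uv \<and> y1\<noteq>Uv \<longrightarrow> x=y1) \<Longrightarrow> (x\<noteq>Uv \<and> y2\<noteq>Uv \<longrightarrow> x=y2) \<Longrightarrow> (y1\<noteq>Uv \<longrightarrow> y1=y2)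
     \<Longrightarrow> join_k x y1 \<noteq> Uv \<Longrightarrow> join_k x y1 = join_k x y2"
    subgoal for x y1 y2 by (cases x; cases y1; cases y2) auto done
  assume "compatible G H1" "compatible G H2" "le_i H1 H2"
  then show ?thesis unfolding compatible_def le_i_def joink_i_def using k by blast
qed

lemma leF: "le_i H (\<lambda>_. Fv) \<longleftrightarrow> (\<forall>A. H A = Uv \<or> H A = Fv)"
  by (auto simp: le_i_def)

lemma compatF: "(\<forall>A. H A = Uv \<or> H A = Fv) \<Longrightarrow> compatible G H \<longleftrightarrow> (\<forall>A. H A = Fv \<longrightarrow> G A = Uv \<or> G A = Fv)"
  unfolding compatible_def by (metis four.distinct)

lemma joinF_noO: "(\<forall>A. G A \<noteq> Ov) \<Longrightarrow> (\<forall>A. H A = Uv \<or> H A = Fv) \<Longrightarrow> compatible G H \<Longrightarrow> \<forall>A. joink_i G H A \<noteq> Ov"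
proof -
  have k: "\<And>x y. x \<noteq> Ov \<Longrightarrow> y = Uv \<or> y = Fv \<Longrightarrow> (y = Fv \<longrightarrow> x = Uv \<or> x = Fv) \<Longrightarrow> join_k x y \<noteq> Ov"
    subgoal for x y by (cases x; cases y) auto done
  assume a: "\<forall>A. G A \<noteq> Ov" "\<forall>A. H A = Uv \<or> H A = Fv" "compatible G H"
  then show ?thesis unfolding compatF[OF a(2)] joink_i_def using k by blast
qed

context
  fixes P :: "('a \<times> 'a lit list) set"
  assumes finP: "finite P"
begin

lemma sound_F_iff:
  assumes noO: "\<forall>A. G A \<noteq> Ov" and HF: "\<forall>A. H A = Uv \<or> H A = Fv"
  shows "sound G (four_rules P) H \<longleftrightarrow> compatible G H \<and>
     (\<forall>A\<in>fst ` P. H A = Fv \<longrightarrow> Phi P (joink_i G H) A = Fv)"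
proof
  assume s: "sound G (four_rules P) H"
  then have c: "compatible G H" by (simp add: sound_def)
  have e: "T_R (four_rules P) (joink_i G H) = Phi P (joink_i G H)"
    using TR_Phi[OF finP joinF_noO[OF noO HF c]] .
  show "compatible G H \<and> (\<forall>A\<in>fst ` P. H A = Fv \<longrightarrow> Phi P (joink_i G H) A = Fv)"
    using s c unfolding sound_def e heads_four le_i_def restrict_i_def
    by (metis four.distinct(3))
next
  assume a: "compatible G H \<and> (\<forall>A\<in>fst ` P. H A = Fv \<longrightarrow> Phi P (joink_i G H) A = Fv)"
  then have c: "compatible G H" by blast
  have e: "T_R (four_rules P) (joink_i G H) = Phi P (joink_i G H)"
    using TR_Phi[OF finP joinF_noO[OF noO HF c]] .
  show "sound G (four_rules P) H"
    unfolding sound_def e heads_four le_i_def restrict_i_def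
    using a HF by (metis (no_types, lifting))
qed

definition Sm :: "'a interp \<Rightarrow> 'a interp" where
  "Sm G = (\<lambda>A. if \<exists>H'. sound G (four_rules P) H' \<and> le_i H' (\<lambda>_. Fv) \<and> H' A = Fv then Fv else Uv)"

lemma SmF0: "Sm G A = Uv \<or> Sm G A = Fv" by (simp add: Sm_def)

lemma Sm_props:
  assumes noO: "\<forall>A. G A \<noteq> Ov"
  shows "sound G (four_rules P) (Sm G)" "le_i (Sm G) (\<lambda>_. Fv)"
    "\<forall>H''. sound G (four_rules P) H'' \<and> le_i H'' (\<lambda>_. Fv) \<longrightarrow> le_i H'' (Sm G)"
proof -
  have SF: "\<forall>A. Sm G A = Uv \<or> Sm G A = Fv" by (simp add: Sm_def)
  then show "le_i (Sm G) (\<lambda>_. Fv)" by (simp add: leF)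
  show "\<forall>H''. sound G (four_rules P) H'' \<and> le_i H'' (\<lambda>_. Fv) \<longrightarrow> le_i H'' (Sm G)"
  proof (intro allI impI)
    fix H'' assume h: "sound G (four_rules P) H'' \<and> le_i H'' (\<lambda>_. Fv)"
    then show "le_i H'' (Sm G)" unfolding le_i_def Sm_def
      using h by (auto simp: leF)
  qed
  have c: "compatible G (Sm G)"
    unfolding compatF[OF SF]
  proof (intro allI impI)
    fix A assume "Sm G A = Fv"
    then obtain H' where h: "sound G (four_rules P) H'" "le_i H' (\<lambda>_. Fv)" "H' A = Fv"
      unfolding Sm_def by (metis four.distinct(3))
    then show "G A = Uv \<or> G A = Fv"
      using compatF[of H' G] by (simp add: leF sound_def)
  qed
  show "sound G (four_rules P) (Sm G)"
    unfolding sound_F_iff[OF noO SF]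
  proof (intro conjI c ballI impI)
    fix A assume A: "A \<in> fst ` P" "Sm G A = Fv"
    then obtain H' where h: "sound G (four_rules P) H'" "le_i H' (\<lambda>_. Fv)" "H' A = Fv"
      unfolding Sm_def by (metis four.distinct(3))
    have HF': "\<forall>A. H' A = Uv \<or> H' A = Fv" using h(2) by (simp add: leF)
    have c': "compatible G H'" using h(1) by (simp add: sound_def)
    have "Phi P (joink_i G H') A = Fv" using h sound_F_iff[OF noO HF'] A by blast
    moreover have "le_i H' (Sm G)"
      unfolding le_i_def Sm_def using h(1,2) HF' by (metis four.distinct(5))
    then have "le_i (joink_i G H') (joink_i G (Sm G))" using compat_mono2 c c' by blast
    ultimately show "Phi P (joink_i G (Sm G)) A = Fv"
      using Phi_mono[of "joink_i G H'" "joink_i G (Sm G)" P] unfolding le_i_def by force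
  qed
qed

lemma support_F: "\<forall>A. G A \<noteq> Ov \<Longrightarrow> support G (four_rules P) (\<lambda>_. Fv) = Sm G"
  using support_eq Sm_props by metis

end


lemma chain_le: "(\<forall>n. le_i (f n) (f (Suc n))) \<Longrightarrow> n \<le> m \<Longrightarrow> le_i (f n) (f m)"
proof (induction m)
  case 0 then show ?case by (simp add: le_i_refl)
next
  case (Suc m)
  show ?case
  proof (cases "n = Suc m")
    case True then show ?thesis by (simp add: le_i_refl)
  next
    case False
    then have "n \<le> m" using Suc.prems by simp
    then show ?thesis using Suc le_i_trans by blast
  qed
qed

lemma stab:
  assumes mono: "\<forall>n. le_i (f n) (f (Suc n))" and fin: "finite DD"
    and out: "\<forall>n A. A \<notin> DD \<longrightarrow> f (Suc n) A = f (Suc 0) A"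
  shows "\<exists>N. f (Suc N) = f N"
proof (rule ccontr)
  assume ne: "\<not> (\<exists>N. f (Suc N) = f N)"
  define S where "S n = {A\<in>DD. f (Suc n) A \<noteq> Uv}" for n
  have finS: "finite (S n)" for n using fin unfolding S_def by simp
  have psub: "S n \<subset> S (Suc n)" for n
  proof
    show "S n \<subseteq> S (Suc n)" using mono unfolding S_def le_i_def by auto
    have "f (Suc (Suc n)) \<noteq> f (Suc n)" using ne by blast
    then obtain A where A: "f (Suc (Suc n)) A \<noteq> f (Suc n) A" by blast
    then have "f (Suc n) A = Uv" using mono unfolding le_i_def by metis
    moreover have "f (Suc (Suc n)) A \<noteq> Uv" using A calculation by simp
    moreover have "A \<in> DD" using out A by metis
    ultimately show "S n \<noteq> S (Suc n)" unfolding S_def by auto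
  qed
  have lt: "card (S n) < card (S (Suc n))" for n
    using psub finS psubset_card_mono by blast
  have ge: "n \<le> card (S n)" for n
  proof (induction n)
    case (Suc n) then show ?case using lt[of n] by simp
  qed simp
  have "card (S n) \<le> card DD" for n using fin unfolding S_def by (intro card_mono) auto
  then show False using ge[of "Suc (card DD)"] by (metis not_less_eq_eq)
qed

lemma hsem_eq:
  assumes mono: "\<forall>n. le_i (hseq F R H n) (hseq F R H (Suc n))"
    and fixN: "hseq F R H (Suc N) = hseq F R H N"
  shows "hsem F R H = hseq F R H N"
proof -
  have const: "hseq F R H (N + k) = hseq F R H N" for k
  proof (induction k)
    case (Suc k)
    have "hseq F R H (N + Suc k) = hseq F R H (Suc (N + k))" by simp
    also have "\<dots> = hseq F R H (Suc N)" using Suc by simp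
    finally show ?case using fixN by simp
  qed simp
  have le: "le_i (hseq F R H n) (hseq F R H N)" for n
  proof (cases "n \<le> N")
    case True then show ?thesis using chain_le[OF mono] by blast
  next
    case False
    then obtain k where "n = N + k" by (metis le_add_diff_inverse nat_le_linear)
    then show ?thesis using const le_i_refl by metis
  qed
  show ?thesis
  proof (rule ext)
    fix A
    show "hsem F R H A = hseq F R H N A"
    proof (cases "hseq F R H N A = Uv")
      case True
      then have "\<forall>n. hseq F R H n A = Uv" using le unfolding le_i_def by metis
      then show ?thesis using True unfolding hsem_def by simp
    next
      case False
      then have ex: "\<exists>n. hseq F R H n A \<noteq> Uv" by blast
      let ?n = "LEAST n. hseq F R H n A \<noteq> Uv"
      have "hseq F R H ?n A \<noteq> Uv" using LeastI_ex[OF ex] .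
      then have "hseq F R H ?n A = hseq F R H N A" using le unfolding le_i_def by blast
      then show ?thesis using ex unfolding hsem_def by simp
    qed
  qed
qed

lemma jk_mono: "le_i x x' \<Longrightarrow> le_i y y' \<Longrightarrow> (\<forall>A. joink_i x' y' A \<noteq> Ov) \<Longrightarrow> le_i (joink_i x y) (joink_i x' y')"
proof -
  have k: "\<And>a a' b b'. (a \<noteq> Uv \<longrightarrow> a = a') \<Longrightarrow> (b \<noteq> Uv \<longrightarrow> b = b') \<Longrightarrow> join_k a' b' \<noteq> Ov
     \<Longrightarrow> join_k a b \<noteq> Uv \<Longrightarrow> join_k a b = join_k a' b'"
    subgoal for a a' b b' by (cases a; cases a'; cases b; cases b') auto done
  assume "le_i x x'" "le_i y y'" "\<forall>A. joink_i x' y' A \<noteq> Ov"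
  then show ?thesis unfolding le_i_def joink_i_def using k by blast
qed


lemma Phi_nonhead: "A \<notin> fst ` P \<Longrightarrow> Phi P G A = Uv"
  unfolding Phi_def by force

context
  fixes P :: "('a \<times> 'a lit list) set"
  assumes finP: "finite P"
begin

definition stepF :: "'a interp \<Rightarrow> 'a interp" where
  "stepF G = joink_i (Phi P G) (Sm P G)"

lemma SmF: "Sm P G A = Uv \<or> Sm P G A = Fv" using SmF0[OF finP] .

lemma Sm_facts:
  assumes noO: "\<forall>A. G A \<noteq> Ov"
  shows "compatible G (Sm P G)"
    "\<And>A. A \<in> fst ` P \<Longrightarrow> Sm P G A = Fv \<Longrightarrow> Phi P (joink_i G (Sm P G)) A = Fv"
    "\<And>H. sound G (four_rules P) H \<Longrightarrow> le_i H (\<lambda>_. Fv) \<Longrightarrow> le_i H (Sm P G)"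
    "\<And>A. Sm P G A = Fv \<Longrightarrow> Phi P G A = Uv \<or> Phi P G A = Fv"
proof -
  have SF: "\<forall>A. Sm P G A = Uv \<or> Sm P G A = Fv" using SmF by blast
  have s: "sound G (four_rules P) (Sm P G)" using Sm_props[OF finP noO] by blast
  then show c: "compatible G (Sm P G)" by (simp add: sound_def)
  show ph: "\<And>A. A \<in> fst ` P \<Longrightarrow> Sm P G A = Fv \<Longrightarrow> Phi P (joink_i G (Sm P G)) A = Fv"
    using s sound_F_iff[OF finP noO SF] by blast
  show "\<And>H. sound G (four_rules P) H \<Longrightarrow> le_i H (\<lambda>_. Fv) \<Longrightarrow> le_i H (Sm P G)"
    using Sm_props[OF finP noO] by blast
  fix A assume A: "Sm P G A = Fv"
  show "Phi P G A = Uv \<or> Phi P G A = Fv"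
  proof (cases "A \<in> fst ` P")
    case True
    then have "Phi P (joink_i G (Sm P G)) A = Fv" using ph A by blast
    moreover have "le_i (Phi P G) (Phi P (joink_i G (Sm P G)))" using Phi_mono compat_le1[OF c] by blast
    ultimately show ?thesis unfolding le_i_def by force
  qed (simp add: Phi_nonhead)
qed

lemma stepF_noO: "\<forall>A. G A \<noteq> Ov \<Longrightarrow> \<forall>A. stepF G A \<noteq> Ov"
proof -
  have k: "\<And>x y. x \<noteq> Ov \<Longrightarrow> y = Uv \<or> y = Fv \<Longrightarrow> (y = Fv \<longrightarrow> x = Uv \<or> x = Fv) \<Longrightarrow> join_k x y \<noteq> Ov"
    subgoal for x y by (cases x; cases y) auto done
  assume noO: "\<forall>A. G A \<noteq> Ov"
  show ?thesis unfolding stepF_def joink_i_def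
    using k Phi_noO SmF Sm_facts(4)[OF noO] by metis
qed

lemma Fs_facts: "(\<forall>A. hseq four_facts (four_rules P) (\<lambda>_. Fv) n A \<noteq> Ov) \<and>
   hseq four_facts (four_rules P) (\<lambda>_. Fv) (Suc n) = stepF (hseq four_facts (four_rules P) (\<lambda>_. Fv) n)"
proof (induction n)
  case 0
  have "\<forall>A. hseq four_facts (four_rules P) (\<lambda>_. Fv) 0 A \<noteq> Ov" by (simp add: four_facts_def)
  then show ?case using TR_Phi[OF finP] support_F[OF finP] by (simp add: stepF_def)
next
  case (Suc n)
  then have "\<forall>A. hseq four_facts (four_rules P) (\<lambda>_. Fv) (Suc n) A \<noteq> Ov" using stepF_noO by simp
  then show ?case using TR_Phi[OF finP] support_F[OF finP] by (simp add: stepF_def)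
qed

lemma step_mono:
  assumes noO: "\<forall>A. G A \<noteq> Ov" and le: "le_i G (stepF G)"
  shows "le_i (stepF G) (stepF (stepF G))"
proof -
  define G' where "G' = stepF G"
  define s where "s = Sm P G"
  have noO': "\<forall>A. G' A \<noteq> Ov" unfolding G'_def using stepF_noO[OF noO] .
  have c: "compatible G s" unfolding s_def using Sm_facts(1)[OF noO] .
  have i: "s A = Fv \<Longrightarrow> G' A = Fv" for A
  proof -
    assume "s A = Fv"
    moreover have "Phi P G A = Uv \<or> Phi P G A = Fv" using Sm_facts(4)[OF noO] calculation s_def by blast
    ultimately show ?thesis unfolding G'_def stepF_def joink_i_def s_def by auto
  qed
  have sF: "\<forall>A. s A = Uv \<or> s A = Fv" unfolding s_def using SmF by blast
  have ii: "le_i (joink_i G s) G'"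
    unfolding le_i_def
  proof (intro allI impI)
    fix x assume ne: "joink_i G s x \<noteq> Uv"
    show "joink_i G s x = G' x"
    proof (cases "s x = Fv")
      case True
      then have "G x = Uv \<or> G x = Fv" using c sF compatF by blast
      then show ?thesis using True i unfolding joink_i_def by auto
    next
      case False
      then have "s x = Uv" using sF by blast
      then show ?thesis using ne le unfolding joink_i_def le_i_def G'_def by auto
    qed
  qed
  have c': "compatible G' s" using compatF[OF sF] i by blast
  have le2: "le_i (joink_i G s) (joink_i G' s)" using le_i_trans[OF ii compat_le1[OF c']] .
  have snd: "sound G' (four_rules P) s"
    unfolding sound_F_iff[OF finP noO' sF]
  proof (intro conjI c' ballI impI)
    fix A assume "A \<in> fst ` P" "s A = Fv"
    then have "Phi P (joink_i G s) A = Fv" using Sm_facts(2)[OF noO] s_def by blast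
    then show "Phi P (joink_i G' s) A = Fv" using Phi_mono[OF le2, of P] unfolding le_i_def by force
  qed
  have "le_i s (Sm P G')" using Sm_facts(3)[OF noO' snd] sF leF by blast
  moreover have "le_i (Phi P G) (Phi P G')" using Phi_mono le G'_def by blast
  ultimately show ?thesis
    using jk_mono stepF_noO[OF noO'] unfolding G'_def stepF_def s_def by blast
qed

lemma Fs_mono: "le_i (hseq four_facts (four_rules P) (\<lambda>_. Fv) n) (hseq four_facts (four_rules P) (\<lambda>_. Fv) (Suc n))"
proof (induction n)
  case 0 then show ?case by (simp add: le_i_def four_facts_def)
next
  case (Suc n)
  then show ?case using Fs_facts step_mono by metis
qed

lemma nonhead_Sm:
  assumes noO: "\<forall>A. G A \<noteq> Ov" and A: "A \<notin> fst ` P" "G A \<noteq> Tv"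
  shows "Sm P G A = Fv"
proof -
  define H where "H = (\<lambda>x. if x = A then Fv else Uv)"
  have HF: "\<forall>x. H x = Uv \<or> H x = Fv" unfolding H_def by simp
  have "sound G (four_rules P) H"
    unfolding sound_F_iff[OF finP noO HF]
  proof (intro conjI ballI impI)
    show "compatible G H" unfolding compatible_def H_def using A noO by (cases "G A") auto
    fix B assume "B \<in> fst ` P" "H B = Fv"
    then show "Phi P (joink_i G H) B = Fv" using A unfolding H_def by (auto split: if_splits)
  qed
  then have "le_i H (Sm P G)" using Sm_facts(3)[OF noO] HF leF by blast
  then show ?thesis unfolding le_i_def H_def by (metis four.distinct(3))
qed

lemma nonhead_step: "A \<notin> fst ` P \<Longrightarrow> \<forall>A. G A \<noteq> Ov \<Longrightarrow> G A \<noteq> Tv \<Longrightarrow> stepF G A = Fv"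
  using nonhead_Sm by (simp add: stepF_def joink_i_def Phi_nonhead)

lemma Fs_nonhead: "A \<notin> fst ` P \<Longrightarrow> hseq four_facts (four_rules P) (\<lambda>_. Fv) n A \<noteq> Tv \<and>
   hseq four_facts (four_rules P) (\<lambda>_. Fv) (Suc n) A = Fv"
proof (induction n)
  case 0
  have "hseq four_facts (four_rules P) (\<lambda>_. Fv) 0 A \<noteq> Tv" by (simp add: four_facts_def)
  then show ?case using Fs_facts[of 0] nonhead_step 0 by metis
next
  case (Suc n)
  then have "hseq four_facts (four_rules P) (\<lambda>_. Fv) (Suc n) A \<noteq> Tv" by simp
  then show ?case using Fs_facts[of "Suc n"] nonhead_step Suc by metis
qed

lemma Phi_T: "Phi P G A = Tv \<Longrightarrow> \<exists>b. (A, b) \<in> P \<and> body_true G b"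
  unfolding Phi_def by (auto split: if_splits)

lemma Phi_F: "Phi P G A = Fv \<Longrightarrow> (A, b) \<in> P \<Longrightarrow> body_false G b"
  unfolding Phi_def by (auto split: if_splits)

lemma Phi_F_intro: "(A, b0) \<in> P \<Longrightarrow> (\<forall>b. (A, b) \<in> P \<longrightarrow> body_false G b) \<Longrightarrow> Phi P G A = Fv"
  unfolding Phi_def using bt_not_bf by (metis (no_types, lifting))

lemma Phi_T_intro: "(A, b) \<in> P \<Longrightarrow> body_true G b \<Longrightarrow> Phi P G A = Tv"
  unfolding Phi_def by auto

lemma in_tp: "L \<in> to_partial G \<longleftrightarrow> lit_val G L = Tv"
  by (cases L) (auto simp: to_partial_def lit_val_def, metis neg4.elims four.distinct)

lemma neg_in_tp: "neg_lit L \<in> to_partial G \<longleftrightarrow> lit_val G L = Fv"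
  by (cases L) (auto simp: to_partial_def lit_val_def, metis neg4.elims four.distinct)

lemma unfounded_mono: "unfounded P I U \<Longrightarrow> I \<subseteq> I' \<Longrightarrow> unfounded P I' U"
  unfolding unfounded_def by blast

lemma UP_unfounded: "unfounded P I (UP P I)"
  unfolding unfounded_def UP_def by blast

lemma UP_greatest: "unfounded P I U \<Longrightarrow> U \<subseteq> UP P I"
  unfolding UP_def by blast

lemma WP_mono: "mono (WP P)"
proof (rule monoI)
  fix I I' :: "'a lit set" assume le: "I \<subseteq> I'"
  have "TP P I \<subseteq> TP P I'" using le unfolding TP_def by blast
  moreover have "UP P I \<subseteq> UP P I'" using le unfounded_mono UP_unfounded UP_greatest by metis
  ultimately show "WP P I \<subseteq> WP P I'" unfolding WP_def by blast
qed

lemma stepT: "\<forall>A. G A \<noteq> Ov \<Longrightarrow> stepF G A = Tv \<Longrightarrow> Phi P G A = Tv"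
proof -
  assume "\<forall>A. G A \<noteq> Ov" "stepF G A = Tv"
  moreover have "Sm P G A = Uv \<or> Sm P G A = Fv" using SmF .
  ultimately show ?thesis unfolding stepF_def joink_i_def
    by (cases "Phi P G A"; cases "Sm P G A") auto
qed

lemma step_sub: assumes noO: "\<forall>A. G A \<noteq> Ov"
  shows "to_partial (stepF G) \<subseteq> WP P (to_partial G)"
proof
  fix L assume L: "L \<in> to_partial (stepF G)"
  define s where "s = Sm P G"
  have sF: "\<forall>A. s A = Uv \<or> s A = Fv" unfolding s_def using SmF by blast
  have c: "compatible G s" unfolding s_def using Sm_facts(1)[OF noO] .
  show "L \<in> WP P (to_partial G)"
  proof (cases L)
    case (Pos A)
    then have "stepF G A = Tv" using L by (simp add: to_partial_def)
    then obtain b where "(A, b) \<in> P" "body_true G b" using stepT[OF noO] Phi_T by metis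
    then have "A \<in> TP P (to_partial G)" unfolding TP_def body_true_def using in_tp by blast
    then show ?thesis using Pos by (simp add: WP_def)
  next
    case (NegL A)
    then have st: "stepF G A = Fv" using L by (auto simp: to_partial_def)
    have st': "join_k (Phi P G A) (s A) = Fv" using st by (simp add: stepF_def joink_i_def s_def)
    have "Phi P G A = Fv \<or> s A = Fv"
      using st' sF by (cases "Phi P G A"; cases "s A") auto
    then have "A \<in> UP P (to_partial G)"
    proof
      assume "Phi P G A = Fv"
      then have "unfounded P (to_partial G) {A}"
        unfolding unfounded_def
      proof (intro ballI allI impI)
        fix x b assume "Phi P G A = Fv" "x \<in> {A}" "(x, b) \<in> P"
        then have "body_false G b" using Phi_F by blast
        then obtain L where "L \<in> set b" "lit_val G L = Fv" unfolding body_false_def by blast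
        then show "\<exists>L\<in>set b. neg_lit L \<in> to_partial G \<or> (\<exists>B. L = Pos B \<and> B \<in> {A})"
          using neg_in_tp by blast
      qed
      then show ?thesis using UP_greatest by blast
    next
      assume sA: "s A = Fv"
      have "unfounded P (to_partial G) {x. s x = Fv}"
        unfolding unfounded_def
      proof (intro ballI allI impI)
        fix x b assume x: "x \<in> {x. s x = Fv}" and xb: "(x, b) \<in> P"
        then have "x \<in> fst ` P" by force
        then have "Phi P (joink_i G s) x = Fv" using Sm_facts(2)[OF noO] x s_def by blast
        then have "body_false (joink_i G s) b" using Phi_F xb by blast
        then obtain L where L: "L \<in> set b" "lit_val (joink_i G s) L = Fv" unfolding body_false_def by blast
        have "neg_lit L \<in> to_partial G \<or> (\<exists>B. L = Pos B \<and> B \<in> {x. s x = Fv})"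
        proof (cases L)
          case (Pos B)
          then have "join_k (G B) (s B) = Fv" using L by (simp add: lit_val_def joink_i_def)
          then have "G B = Fv \<or> s B = Fv" using sF by (cases "G B"; cases "s B") auto
          then show ?thesis using Pos by (auto simp: to_partial_def)
        next
          case (NegL B)
          then have "neg4 (join_k (G B) (s B)) = Fv" using L by (simp add: lit_val_def joink_i_def)
          then have "G B = Tv" using sF[rule_format, of B] by (cases "G B"; cases "s B") auto
          then show ?thesis using NegL by (auto simp: to_partial_def)
        qed
        then show "\<exists>L\<in>set b. neg_lit L \<in> to_partial G \<or> (\<exists>B. L = Pos B \<and> B \<in> {x. s x = Fv})"
          using L(1) by blast
      qed
      then show ?thesis using UP_greatest sA by blast
    qed
    then show ?thesis using NegL by (simp add: WP_def)
  qed
qed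

lemma part1:
  "(\<forall>A. hsem four_facts (four_rules P) (\<lambda>_. Fv) A \<noteq> Ov)
   \<and> to_partial (hsem four_facts (four_rules P) (\<lambda>_. Fv)) = wfs P"
proof -
  let ?F = "hseq four_facts (four_rules P) (\<lambda>_. Fv)"
  have out: "\<forall>n A. A \<notin> fst ` P \<longrightarrow> ?F (Suc n) A = ?F (Suc 0) A"
    using Fs_nonhead by metis
  obtain N where N: "?F (Suc N) = ?F N"
    using stab[OF _ finite_imageI[OF finP] out] Fs_mono by blast
  define M where "M = ?F N"
  have hs: "hsem four_facts (four_rules P) (\<lambda>_. Fv) = M"
    unfolding M_def using hsem_eq Fs_mono N by blast
  have noO: "\<forall>A. M A \<noteq> Ov" unfolding M_def using Fs_facts by blast
  have Mst: "stepF M = M" unfolding M_def using Fs_facts N by metis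
  have const: "?F (N + k) = M" for k
  proof (induction k)
    case 0 then show ?case by (simp add: M_def)
  next
    case (Suc k)
    have "?F (N + Suc k) = stepF (?F (N + k))" using Fs_facts by simp
    then show ?case using Suc Mst by simp
  qed
  have leM: "le_i (?F m) M" for m
  proof (cases "m \<le> N")
    case True then show ?thesis unfolding M_def using chain_le Fs_mono by blast
  next
    case False
    then obtain k where "m = N + k" by (metis le_add_diff_inverse nat_le_linear)
    then show ?thesis using const le_i_refl by metis
  qed
  define X where "X = to_partial M"
  have sub_lfp: "to_partial (?F n) \<subseteq> lfp (WP P)" for n
  proof (induction n)
    case 0 then show ?case by (simp add: to_partial_def four_facts_def)
  next
    case (Suc n)
    have "to_partial (?F (Suc n)) \<subseteq> WP P (to_partial (?F n))"
      using Fs_facts step_sub by metis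
    also have "\<dots> \<subseteq> WP P (lfp (WP P))" using Suc WP_mono by (meson monoD)
    also have "\<dots> = lfp (WP P)" using lfp_fixpoint[OF WP_mono] .
    finally show ?case .
  qed
  have TPX: "Pos ` TP P X \<subseteq> X"
  proof
    fix L assume "L \<in> Pos ` TP P X"
    then obtain A b where L: "L = Pos A" "(A, b) \<in> P" "\<forall>L\<in>set b. L \<in> X"
      unfolding TP_def by blast
    then have "body_true M b" unfolding X_def body_true_def using in_tp by blast
    then have ph: "Phi P M A = Tv" using Phi_T_intro L by blast
    have "stepF M A \<noteq> Ov" using stepF_noO[OF noO] by blast
    then have "stepF M A = Tv" using ph unfolding stepF_def joink_i_def
      by (cases "Sm P M A") auto
    then show "L \<in> X" using Mst L unfolding X_def by (simp add: to_partial_def)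
  qed
  have stage: "?F m A = Tv \<Longrightarrow> A \<notin> UP P X" for m A
  proof (induction m arbitrary: A)
    case 0 then show ?case by (simp add: four_facts_def)
  next
    case (Suc m)
    have nO: "\<forall>A. ?F m A \<noteq> Ov" using Fs_facts by blast
    have "stepF (?F m) A = Tv" using Suc.prems Fs_facts by metis
    then obtain b where b: "(A, b) \<in> P" "body_true (?F m) b" using stepT[OF nO] Phi_T by metis
    have bM: "body_true M b" using bt_mono[OF leM b(2)] .
    show ?case
    proof
      assume "A \<in> UP P X"
      then obtain L where L: "L \<in> set b" "neg_lit L \<in> X \<or> (\<exists>B. L = Pos B \<and> B \<in> UP P X)"
        using UP_unfounded b(1) unfolding unfounded_def by blast
      show False
      proof (cases "neg_lit L \<in> X")
        case True
        then have "lit_val M L = Fv" unfolding X_def using neg_in_tp by blast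
        then show False using bM L(1) unfolding body_true_def by auto
      next
        case False
        then obtain B where B: "L = Pos B" "B \<in> UP P X" using L by blast
        then have "?F m B = Tv" using b(2) L(1) unfolding body_true_def lit_val_def by auto
        then show False using Suc.IH B by blast
      qed
    qed
  qed
  have UPX: "NegL ` UP P X \<subseteq> X"
  proof -
    define H where "H = (\<lambda>x. if x \<in> UP P X then Fv else Uv)"
    have HF: "\<forall>x. H x = Uv \<or> H x = Fv" unfolding H_def by simp
    have notT: "x \<in> UP P X \<Longrightarrow> M x = Uv \<or> M x = Fv" for x
      using stage[of N x] noO unfolding M_def by (cases "M x") (auto simp: M_def)
    have c: "compatible M H" unfolding compatible_def H_def using notT by auto
    have snd: "sound M (four_rules P) H"
      unfolding sound_F_iff[OF finP noO HF]
    proof (intro conjI c ballI impI)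
      fix A assume A: "A \<in> fst ` P" "H A = Fv"
      then have AU: "A \<in> UP P X" unfolding H_def by (auto split: if_splits)
      obtain b0 where b0: "(A, b0) \<in> P" using A by force
      show "Phi P (joink_i M H) A = Fv"
      proof (rule Phi_F_intro[OF b0], intro allI impI)
        fix b assume b: "(A, b) \<in> P"
        then obtain L where L: "L \<in> set b" "neg_lit L \<in> X \<or> (\<exists>B. L = Pos B \<and> B \<in> UP P X)"
          using UP_unfounded AU unfolding unfounded_def by blast
        have "lit_val (joink_i M H) L = Fv"
        proof (cases "neg_lit L \<in> X")
          case True
          then have "lit_val M L = Fv" unfolding X_def using neg_in_tp by blast
          then show ?thesis using lit_val_mono[OF compat_le1[OF c]] by fastforce
        next
          case False
          then obtain B where B: "L = Pos B" "B \<in> UP P X" using L by blast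
          then have "M B = Uv \<or> M B = Fv" using notT by blast
          then show ?thesis using B unfolding lit_val_def joink_i_def H_def by auto
        qed
        then show "body_false (joink_i M H) b" using L(1) unfolding body_false_def by blast
      qed
    qed
    have "le_i H (Sm P M)" using Sm_facts(3)[OF noO snd] HF leF by blast
    show ?thesis
    proof
      fix L assume "L \<in> NegL ` UP P X"
      then obtain A where A: "L = NegL A" "A \<in> UP P X" by blast
      then have "Sm P M A = Fv" using \<open>le_i H (Sm P M)\<close> unfolding le_i_def H_def by (metis four.distinct(3))
      moreover have "stepF M A \<noteq> Ov" using stepF_noO[OF noO] by blast
      ultimately have "stepF M A = Fv" unfolding stepF_def joink_i_def
        by (cases "Phi P M A") auto
      then show "L \<in> X" using Mst A unfolding X_def by (simp add: to_partial_def)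
    qed
  qed
  have "WP P X \<subseteq> X" using TPX UPX unfolding WP_def by blast
  then have "lfp (WP P) \<subseteq> X" by (rule lfp_lowerbound)
  moreover have "X \<subseteq> lfp (WP P)" unfolding X_def M_def using sub_lfp .
  ultimately have "X = wfs P" unfolding wfs_def by blast
  then show ?thesis using hs noO X_def by simp
qed

lemma part2: "hsem four_facts (four_rules P) (\<lambda>_. Uv) = kk P"
proof -
  let ?U = "hseq four_facts (four_rules P) (\<lambda>_. Uv)"
  have jU: "joink_i I (\<lambda>_. Uv) = I" for I :: "'a interp" by (simp add: joink_i_def)
  have Us: "(\<forall>A. ?U n A \<noteq> Ov) \<and> ?U (Suc n) = Phi P (?U n)" for n
  proof (induction n)
    case 0
    have "\<forall>A. ?U 0 A \<noteq> Ov" by (simp add: four_facts_def)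
    then show ?case using TR_Phi[OF finP] by (simp add: support_U jU)
  next
    case (Suc n)
    then have "?U (Suc n) = Phi P (?U n)" by blast
    then have "\<forall>A. ?U (Suc n) A \<noteq> Ov" by (simp add: Phi_noO)
    then show ?case using TR_Phi[OF finP] by (simp add: support_U jU)
  qed
  have mono: "\<forall>n. le_i (?U n) (?U (Suc n))"
  proof
    fix n show "le_i (?U n) (?U (Suc n))"
    proof (induction n)
      case 0 then show ?case by (simp add: le_i_def four_facts_def)
    next
      case (Suc n) then show ?case using Us Phi_mono by metis
    qed
  qed
  have out: "\<forall>n A. A \<notin> fst ` P \<longrightarrow> ?U (Suc n) A = ?U (Suc 0) A"
    using Us Phi_nonhead by metis
  obtain N where N: "?U (Suc N) = ?U N"
    using stab[OF mono finite_imageI[OF finP] out] by blast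
  have hs: "hsem four_facts (four_rules P) (\<lambda>_. Uv) = ?U N" using hsem_eq[OF mono N] .
  have fp: "Phi P (?U N) = ?U N" using Us N by metis
  have least: "Phi P w = w \<Longrightarrow> le_i (?U n) w" for w n
  proof (induction n)
    case 0 then show ?case by (simp add: le_i_def four_facts_def)
  next
    case (Suc n) then show ?case using Us Phi_mono by metis
  qed
  have "kk P = ?U N"
    unfolding kk_def
  proof (rule the_equality)
    show "Phi P (?U N) = ?U N \<and> (\<forall>w. Phi P w = w \<longrightarrow> le_i (?U N) w)" using fp least by blast
  next
    fix v assume "Phi P v = v \<and> (\<forall>w. Phi P w = w \<longrightarrow> le_i v w)"
    then show "v = ?U N" using fp least le_i_antisym by blast
  qed
  then show ?thesis using hs by simp
qed

end

theorem theorem2: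
  fixes P :: "('a \<times> 'a lit list) set"
  assumes "finite P"
  shows "((\<forall>A. hsem four_facts (four_rules P) (\<lambda>_. Fv) A \<noteq> Ov)
           \<and> to_partial (hsem four_facts (four_rules P) (\<lambda>_. Fv)) = wfs P)
         \<and> hsem four_facts (four_rules P) (\<lambda>_. Uv) = kk P"
  using part1[OF assms] part2[OF assms] by blast

end
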